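(* Let $\oplus$ be a combinator whose domain is the set of all pairs of tpos over $W$. Then $\oplus$ is a TeamQueue combinator if and only if $\oplus$ is basic and satisfies, for all pairs $\langle\preceq_1,\preceq_2\rangle$ and all $x,y,z \in W$: ($\oplus$SPU+) if $x \prec_1 y$ and $z \prec_2 y$ then $x \prec_{1\oplus 2} y$ or $z \prec_{1\oplus 2} y$; ($\oplus$WPU+) if $x \preceq_1 y$ and $z \preceq_2 y$ then $x \preceq_{1\oplus 2} y$ or $z \preceq_{1\oplus 2} y$; ($\oplus$NO) for $i \neq j$ in $\{1,2\}$, if $x \prec_i y$ and $z \preceq_j y$ then $x \prec_{1\oplus 2} y$ or $z \preceq_{1\oplus 2} y$.
   Context: $W$ is a finite nonempty set (of possible worlds). A tpo is a total preorder on $W$; $\prec$ and $\sim$ denote strict and symmetric parts. For $S \subseteq W$, $\min(\preceq, S) = \{x \in S : x \preceq y \text{ for all } y \in S\}$. A combinator $\oplus$ maps pairs of tpos $\langle\preceq_1,\preceq_2\rangle$ in its domain to a tpo $\preceq_{1\oplus 2}$. It is basic if $\min(\preceq_{1\oplus 2}, W) = \min(\preceq_1, W) \cup \min(\preceq_2, W)$ for every pair in its domain. $\oplus$ is a TeamQueue combinator if for each pair $\langle\preceq_1,\preceq_2\rangle$ in its domain there is a sequence $\langle a(i)\rangle_{i \in \mathbb{N}}$ (depending on the pair) with $\emptyset \neq a(i) \subseteq \{1,2\}$ for all $i$ and $a(1) = \{1,2\}$, such that $\preceq_{1\oplus 2}$ is the tpo whose ordered partition into ranks (lowest = most plausible first)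 is $\langle T_1, \ldots, T_m\rangle$, where inductively $T_i = \bigcup_{j \in a(i)} \min(\preceq_j, \bigcap_{k<i} T_k^c)$ ($T^c$ the complement of $T$ in $W$) and $m$ is minimal with $\bigcup_{i \le m} T_i = W$; i.e. $x \preceq_{1\oplus 2} y$ iff the index of the cell containing $x$ is at most that of the cell containing $y$. *)

theory Defs
  imports Main
begin

text \<open>W is modelled as a finite type 'w (finite, and nonempty as every type).
  A tpo is a binary relation 'w \<Rightarrow> 'w \<Rightarrow> bool (r x y read as x \<preceq> y).\<close>

definition tpo :: "('w \<Rightarrow> 'w \<Rightarrow> bool) \<Rightarrow> bool" where
  "tpo r \<longleftrightarrow> (\<forall>x. r x x) \<and> (\<forall>x y z. r x y \<longrightarrow> r y z \<longrightarrow> r x z) \<and> (\<forall>x y. r x y \<or> r y x)"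

definition strict :: "('w \<Rightarrow> 'w \<Rightarrow> bool) \<Rightarrow> 'w \<Rightarrow> 'w \<Rightarrow> bool" where
  "strict r x y \<longleftrightarrow> r x y \<and> \<not> r y x"

definition minset :: "('w \<Rightarrow> 'w \<Rightarrow> bool) \<Rightarrow> 'w set \<Rightarrow> 'w set" where
  "minset r S = {x \<in> S. \<forall>y \<in> S. r x y}"

definition is_combinator :: "(('w \<Rightarrow> 'w \<Rightarrow> bool) \<Rightarrow> ('w \<Rightarrow> 'w \<Rightarrow> bool) \<Rightarrow> ('w \<Rightarrow> 'w \<Rightarrow> bool)) \<Rightarrow> bool" where
  "is_combinator c \<longleftrightarrow> (\<forall>r1 r2. tpo r1 \<longrightarrow> tpo r2 \<longrightarrow> tpo (c r1 r2))"

definition basic :: "(('w \<Rightarrow> 'w \<Rightarrow> bool) \<Rightarrow> ('w \<Rightarrow> 'w \<Rightarrow> bool) \<Rightarrow> ('w \<Rightarrow> 'w \<Rightarrow> bool)) \<Rightarrow> bool" where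
  "basic c \<longleftrightarrow> (\<forall>r1 r2. tpo r1 \<longrightarrow> tpo r2 \<longrightarrow>
      minset (c r1 r2) UNIV = minset r1 UNIV \<union> minset r2 UNIV)"

definition sel :: "('w \<Rightarrow> 'w \<Rightarrow> bool) \<Rightarrow> ('w \<Rightarrow> 'w \<Rightarrow> bool) \<Rightarrow> nat \<Rightarrow> ('w \<Rightarrow> 'w \<Rightarrow> bool)" where
  "sel r1 r2 j = (if j = 1 then r1 else r2)"

text \<open>tq_rest r1 r2 a n = complement of T_1 \<union> ... \<union> T_n;  tq_cell r1 r2 a i = T_i (i \<ge> 1).\<close>
primrec tq_rest :: "('w \<Rightarrow> 'w \<Rightarrow> bool) \<Rightarrow> ('w \<Rightarrow> 'w \<Rightarrow> bool) \<Rightarrow> (nat \<Rightarrow> nat set) \<Rightarrow> nat \<Rightarrow> 'w set" where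
  "tq_rest r1 r2 a 0 = UNIV"
| "tq_rest r1 r2 a (Suc n) =
     tq_rest r1 r2 a n - (\<Union>j \<in> a (Suc n). minset (sel r1 r2 j) (tq_rest r1 r2 a n))"

definition tq_cell :: "('w \<Rightarrow> 'w \<Rightarrow> bool) \<Rightarrow> ('w \<Rightarrow> 'w \<Rightarrow> bool) \<Rightarrow> (nat \<Rightarrow> nat set) \<Rightarrow> nat \<Rightarrow> 'w set" where
  "tq_cell r1 r2 a i = (\<Union>j \<in> a i. minset (sel r1 r2 j) (tq_rest r1 r2 a (i - 1)))"

definition tq_rank :: "('w \<Rightarrow> 'w \<Rightarrow> bool) \<Rightarrow> ('w \<Rightarrow> 'w \<Rightarrow> bool) \<Rightarrow> (nat \<Rightarrow> nat set) \<Rightarrow> 'w \<Rightarrow> nat" where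
  "tq_rank r1 r2 a x = (LEAST i. 1 \<le> i \<and> x \<in> tq_cell r1 r2 a i)"

definition teamqueue :: "(('w \<Rightarrow> 'w \<Rightarrow> bool) \<Rightarrow> ('w \<Rightarrow> 'w \<Rightarrow> bool) \<Rightarrow> ('w \<Rightarrow> 'w \<Rightarrow> bool)) \<Rightarrow> bool" where
  "teamqueue c \<longleftrightarrow> (\<forall>r1 r2. tpo r1 \<longrightarrow> tpo r2 \<longrightarrow>
     (\<exists>a :: nat \<Rightarrow> nat set.
        (\<forall>i \<ge> 1. a i \<noteq> {} \<and> a i \<subseteq> {1, 2}) \<and> a 1 = {1, 2} \<and>
        (\<exists>m. (\<Union>i \<in> {1..m}. tq_cell r1 r2 a i) = UNIV) \<and>
        (\<forall>x y. c r1 r2 x y \<longleftrightarrow> tq_rank r1 r2 a x \<le> tq_rank r1 r2 a y)))"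

end

theory Submission
  imports Defs
begin

lemma minset_ne:
  assumes "tpo r" "finite S" "S \<noteq> {}"
  shows "minset r S \<noteq> {}"
  using assms(2,3)
proof (induction S rule: finite_ne_induct)
  case (singleton x)
  then show ?case using assms(1) by (auto simp: minset_def tpo_def)
next
  case (insert x F)
  then obtain m where m: "m \<in> minset r F" by blast
  show ?case
  proof (cases "r m x")
    case True
    then have "m \<in> minset r (insert x F)" using m by (auto simp: minset_def)
    then show ?thesis by blast
  next
    case False
    then have "r x m" using assms(1) by (auto simp: tpo_def)
    then have "x \<in> minset r (insert x F)" using m assms(1) unfolding minset_def tpo_def by blast
    then show ?thesis by blast
  qed
qed

lemma rest_eq: "tq_rest r1 r2 a k = UNIV - (\<Union>i\<in>{1..k}. tq_cell r1 r2 a i)"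
proof (induction k)
  case 0
  then show ?case by simp
next
  case (Suc n)
  have "tq_rest r1 r2 a (Suc n) = tq_rest r1 r2 a n - tq_cell r1 r2 a (Suc n)"
    by (simp add: tq_cell_def)
  moreover have "{1..Suc n} = insert (Suc n) {1..n}" by auto
  ultimately show ?case using Suc by auto
qed

lemma cell_sub: "1 \<le> i \<Longrightarrow> tq_cell r1 r2 a i \<subseteq> tq_rest r1 r2 a (i - 1)"
  by (auto simp: tq_cell_def minset_def)

lemma rest_mono: "k \<le> l \<Longrightarrow> tq_rest r1 r2 a l \<subseteq> tq_rest r1 r2 a k"
  unfolding rest_eq by auto

lemma rank_cell:
  assumes "1 \<le> i" "x \<in> tq_cell r1 r2 a i"
  shows "tq_rank r1 r2 a x = i"
  unfolding tq_rank_def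
proof (rule Least_equality)
  show "1 \<le> i \<and> x \<in> tq_cell r1 r2 a i" using assms by simp
next
  fix j assume j: "1 \<le> j \<and> x \<in> tq_cell r1 r2 a j"
  show "i \<le> j"
  proof (rule ccontr)
    assume "\<not> i \<le> j"
    then have "j \<in> {1..i-1}" using j by auto
    moreover have "x \<in> tq_rest r1 r2 a (i - 1)" using cell_sub[of i r1 r2 a] assms by blast
    ultimately show False using j unfolding rest_eq by blast
  qed
qed

lemma rank_in_cell:
  assumes cov: "(\<Union>i\<in>{1..m}. tq_cell r1 r2 a i) = UNIV"
  shows "x \<in> tq_cell r1 r2 a (tq_rank r1 r2 a x) \<and> 1 \<le> tq_rank r1 r2 a x"
proof -
  obtain i where "i \<in> {1..m}" "x \<in> tq_cell r1 r2 a i" using cov by blast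
  then show ?thesis using rank_cell[of i x] by auto
qed

lemma rank_not_rest:
  assumes "x \<notin> tq_rest r1 r2 a k"
  shows "tq_rank r1 r2 a x \<le> k"
proof -
  obtain i where "i \<in> {1..k}" "x \<in> tq_cell r1 r2 a i" using assms unfolding rest_eq by blast
  then show ?thesis using rank_cell[of i x] by auto
qed

lemma rank_rest:
  assumes cov: "(\<Union>i\<in>{1..m}. tq_cell r1 r2 a i) = UNIV"
    and "x \<in> tq_rest r1 r2 a k"
  shows "k < tq_rank r1 r2 a x"
proof (rule ccontr)
  assume "\<not> k < tq_rank r1 r2 a x"
  moreover have "x \<in> tq_cell r1 r2 a (tq_rank r1 r2 a x) \<and> 1 \<le> tq_rank r1 r2 a x"
    using rank_in_cell[OF cov] by blast
  ultimately show False using assms(2) unfolding rest_eq by auto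
qed

lemma sel_tpo: "tpo r1 \<Longrightarrow> tpo r2 \<Longrightarrow> tpo (sel r1 r2 j)"
  by (simp add: sel_def)

lemma weak_lem:
  assumes "tpo (sel r1 r2 j)" "j \<in> a n" "1 \<le> n"
    "y \<in> minset (sel r1 r2 j) (tq_rest r1 r2 a (n-1))" "sel r1 r2 j w y"
  shows "tq_rank r1 r2 a w \<le> n"
proof (cases "w \<in> tq_rest r1 r2 a (n-1)")
  case True
  then have "w \<in> minset (sel r1 r2 j) (tq_rest r1 r2 a (n-1))"
    using assms(1,4,5) unfolding minset_def tpo_def by blast
  then have "w \<in> tq_cell r1 r2 a n" using assms(2) unfolding tq_cell_def by blast
  then show ?thesis using rank_cell assms(3) by fastforce
next
  case False
  then show ?thesis using rank_not_rest by fastforce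
qed

lemma strict_lem:
  assumes "1 \<le> n"
    "y \<in> minset (sel r1 r2 j) (tq_rest r1 r2 a (n-1))" "strict (sel r1 r2 j) w y"
  shows "tq_rank r1 r2 a w < n"
proof -
  have "w \<notin> tq_rest r1 r2 a (n-1)" using assms(2,3) by (auto simp: minset_def strict_def)
  then have "tq_rank r1 r2 a w \<le> n - 1" by (rule rank_not_rest)
  then show ?thesis using assms(1) by linarith
qed

lemma y_cell:
  assumes cov: "(\<Union>i\<in>{1..m}. tq_cell r1 r2 a i) = UNIV"
  obtains j where "j \<in> a (tq_rank r1 r2 a y)" "1 \<le> tq_rank r1 r2 a y"
    "y \<in> minset (sel r1 r2 j) (tq_rest r1 r2 a (tq_rank r1 r2 a y - 1))"
  using rank_in_cell[OF cov, of y] unfolding tq_cell_def by blast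


lemma key:
  fixes r1 r2 cc :: "'w::finite \<Rightarrow> 'w \<Rightarrow> bool"
  assumes t1: "tpo r1" and t2: "tpo r2" and tc: "tpo cc"
    and spu: "\<And>x y z. strict r1 x y \<Longrightarrow> strict r2 z y \<Longrightarrow> strict cc x y \<or> strict cc z y"
    and wpu: "\<And>x y z. r1 x y \<Longrightarrow> r2 z y \<Longrightarrow> cc x y \<or> cc z y"
    and no1: "\<And>x y z. strict r1 x y \<Longrightarrow> r2 z y \<Longrightarrow> strict cc x y \<or> cc z y"
    and no2: "\<And>x y z. strict r2 x y \<Longrightarrow> r1 z y \<Longrightarrow> strict cc x y \<or> cc z y"
  shows "minset cc D = minset r1 D \<union> minset r2 D \<or> minset cc D = minset r1 D \<or> minset cc D = minset r2 D"
proof (cases "D = {}")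
  case True
  then show ?thesis by (simp add: minset_def)
next
  case False
  define S where "S = minset cc D"
  define M1 where "M1 = minset r1 D"
  define M2 where "M2 = minset r2 D"
  have SD: "S \<subseteq> D" and M1D: "M1 \<subseteq> D" and M2D: "M2 \<subseteq> D"
    by (auto simp: S_def M1_def M2_def minset_def)
  have Sne: "S \<noteq> {}" using minset_ne[OF tc] False unfolding S_def by simp
  have M1ne: "M1 \<noteq> {}" using minset_ne[OF t1] False unfolding M1_def by simp
  have M2ne: "M2 \<noteq> {}" using minset_ne[OF t2] False unfolding M2_def by simp
  have Smin: "\<And>y u. y \<in> S \<Longrightarrow> u \<in> D \<Longrightarrow> cc y u" by (auto simp: S_def minset_def)
  have Sin: "\<And>y w. y \<in> S \<Longrightarrow> w \<in> D \<Longrightarrow> cc w y \<Longrightarrow> w \<in> S"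
    using tc unfolding S_def minset_def tpo_def by blast
  have nonmin1: "\<And>y. y \<in> D \<Longrightarrow> y \<notin> M1 \<Longrightarrow> z \<in> M1 \<Longrightarrow> strict r1 z y" for z
    using t1 unfolding M1_def minset_def strict_def tpo_def by blast
  have nonmin2: "\<And>y. y \<in> D \<Longrightarrow> y \<notin> M2 \<Longrightarrow> z \<in> M2 \<Longrightarrow> strict r2 z y" for z
    using t2 unfolding M2_def minset_def strict_def tpo_def by blast
  have A: "S \<subseteq> M1 \<union> M2"
  proof
    fix y assume y: "y \<in> S"
    show "y \<in> M1 \<union> M2"
    proof (rule ccontr)
      assume n: "y \<notin> M1 \<union> M2"
      obtain x where x: "x \<in> M1" using M1ne by blast
      obtain z where z: "z \<in> M2" using M2ne by blast
      have "strict r1 x y" "strict r2 z y" using nonmin1 nonmin2 x z n y SD by auto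
      then have "strict cc x y \<or> strict cc z y" by (rule spu)
      moreover have "cc y x" "cc y z" using Smin y x z M1D M2D by auto
      ultimately show False by (auto simp: strict_def)
    qed
  qed
  have B: "M1 \<subseteq> S" if hB: "\<not> S \<subseteq> M2"
  proof
    fix w assume w: "w \<in> M1"
    obtain y where y: "y \<in> S" "y \<notin> M2" using hB by blast
    have yM1: "y \<in> M1" using A y by blast
    obtain z where z: "z \<in> M2" using M2ne by blast
    have "strict r2 z y" using nonmin2 y z SD by auto
    moreover have "r1 w y" using w yM1 by (auto simp: M1_def minset_def)
    ultimately have "strict cc z y \<or> cc w y" by (rule no2)
    moreover have "cc y z" using Smin y z M2D by auto
    ultimately have "cc w y" by (auto simp: strict_def)
    then show "w \<in> S" using Sin y w M1D by auto
  qed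
  have C: "M2 \<subseteq> S" if hC: "\<not> S \<subseteq> M1"
  proof
    fix w assume w: "w \<in> M2"
    obtain y where y: "y \<in> S" "y \<notin> M1" using hC by blast
    have yM2: "y \<in> M2" using A y by blast
    obtain z where z: "z \<in> M1" using M1ne by blast
    have "strict r1 z y" using nonmin1 y z SD by auto
    moreover have "r2 w y" using w yM2 by (auto simp: M2_def minset_def)
    ultimately have "strict cc z y \<or> cc w y" by (rule no1)
    moreover have "cc y z" using Smin y z M1D by auto
    ultimately have "cc w y" by (auto simp: strict_def)
    then show "w \<in> S" using Sin y w M2D by auto
  qed
  have E: "M1 \<subseteq> S \<or> M2 \<subseteq> S"
  proof (rule ccontr)
    assume "\<not> (M1 \<subseteq> S \<or> M2 \<subseteq> S)"
    then obtain w1 w2 where w: "w1 \<in> M1" "w1 \<notin> S" "w2 \<in> M2" "w2 \<notin> S" by blast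
    obtain y where y: "y \<in> S" using Sne by blast
    have "y \<in> D" using y SD by auto
    then have "r1 w1 y" "r2 w2 y" using w by (auto simp: M1_def M2_def minset_def)
    then have "cc w1 y \<or> cc w2 y" by (rule wpu)
    then show False using Sin y w M1D M2D by blast
  qed
  show ?thesis
    using A B C E unfolding S_def[symmetric] M1_def[symmetric] M2_def[symmetric] by blast
qed

definition Dseq :: "('w \<Rightarrow> 'w \<Rightarrow> bool) \<Rightarrow> nat \<Rightarrow> 'w set" where
  "Dseq cc k = ((\<lambda>D. D - minset cc D) ^^ k) UNIV"

lemma Dseq_0[simp]: "Dseq cc 0 = UNIV" by (simp add: Dseq_def)
lemma Dseq_Suc[simp]: "Dseq cc (Suc k) = Dseq cc k - minset cc (Dseq cc k)" by (simp add: Dseq_def)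

lemma Dseq_card:
  fixes cc :: "'w::finite \<Rightarrow> 'w \<Rightarrow> bool"
  assumes "tpo cc"
  shows "Dseq cc k \<noteq> {} \<Longrightarrow> card (Dseq cc k) + k \<le> card (UNIV :: 'w set)"
proof (induction k)
  case 0
  then show ?case by (simp add: card_mono)
next
  case (Suc k)
  have ne: "Dseq cc k \<noteq> {}" using Suc.prems by auto
  have h1: "minset cc (Dseq cc k) \<noteq> {}" using minset_ne[OF assms] ne by simp
  have h2: "minset cc (Dseq cc k) \<subseteq> Dseq cc k" by (auto simp: minset_def)
  have "card (Dseq cc (Suc k)) < card (Dseq cc k)"
  proof -
    have "Dseq cc (Suc k) \<subset> Dseq cc k" using h1 h2 by auto
    then show ?thesis by (simp add: psubset_card_mono)
  qed
  then show ?case using Suc.IH ne by simp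
qed

lemma Dseq_empty:
  fixes cc :: "'w::finite \<Rightarrow> 'w \<Rightarrow> bool"
  assumes "tpo cc"
  shows "Dseq cc (card (UNIV :: 'w set)) = {}"
proof (rule ccontr)
  assume ne: "Dseq cc (card (UNIV :: 'w set)) \<noteq> {}"
  then have "card (Dseq cc (card (UNIV :: 'w set))) > 0" by (simp add: card_gt_0_iff)
  then show False using Dseq_card[OF assms ne] by simp
qed

lemma forward:
  fixes r1 r2 cc :: "'w::finite \<Rightarrow> 'w \<Rightarrow> bool"
  assumes t1: "tpo r1" and t2: "tpo r2"
    and a: "\<forall>i \<ge> 1. a i \<noteq> {} \<and> a i \<subseteq> {1, 2}" "a 1 = {1, 2}"
    and cov: "(\<Union>i \<in> {1..m}. tq_cell r1 r2 a i) = UNIV"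
    and ceq: "\<forall>x y. cc x y \<longleftrightarrow> tq_rank r1 r2 a x \<le> tq_rank r1 r2 a y"
  shows "minset cc UNIV = minset r1 UNIV \<union> minset r2 UNIV \<and>
    (\<forall>x y z.
       (strict r1 x y \<and> strict r2 z y \<longrightarrow> strict cc x y \<or> strict cc z y) \<and>
       (r1 x y \<and> r2 z y \<longrightarrow> cc x y \<or> cc z y) \<and>
       (strict r1 x y \<and> r2 z y \<longrightarrow> strict cc x y \<or> cc z y) \<and>
       (strict r2 x y \<and> r1 z y \<longrightarrow> strict cc x y \<or> cc z y))"
proof -
  let ?rk = "tq_rank r1 r2 a"
  have sc: "strict cc x y \<longleftrightarrow> ?rk x < ?rk y" for x y using ceq by (auto simp: strict_def)
  have s1: "sel r1 r2 1 = r1" and s2: "sel r1 r2 2 = r2" by (auto simp: sel_def)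
  have cell1: "tq_cell r1 r2 a 1 = minset r1 UNIV \<union> minset r2 UNIV"
    using a(2) by (simp add: tq_cell_def sel_def)
  have basic: "minset cc UNIV = minset r1 UNIV \<union> minset r2 UNIV"
  proof
    show "minset cc UNIV \<subseteq> minset r1 UNIV \<union> minset r2 UNIV"
    proof
      fix x assume x: "x \<in> minset cc UNIV"
      have "minset r1 UNIV \<noteq> {}" using minset_ne[OF t1] by simp
      then obtain y where y: "y \<in> tq_cell r1 r2 a 1" using cell1 by blast
      have "?rk y = 1" using rank_cell[OF _ y] by simp
      moreover have "cc x y" using x by (simp add: minset_def)
      ultimately have "?rk x = 1" using ceq rank_in_cell[OF cov, of x] by auto
      then show "x \<in> minset r1 UNIV \<union> minset r2 UNIV"
        using rank_in_cell[OF cov, of x] cell1 by auto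
    qed
  next
    show "minset r1 UNIV \<union> minset r2 UNIV \<subseteq> minset cc UNIV"
    proof
      fix x assume "x \<in> minset r1 UNIV \<union> minset r2 UNIV"
      then have "?rk x = 1" using rank_cell[of 1 x] cell1 by auto
      then show "x \<in> minset cc UNIV" using ceq rank_in_cell[OF cov] by (auto simp: minset_def)
    qed
  qed
  have jcase: "j = 1 \<or> j = 2" if "j \<in> a n" "1 \<le> n" for j n using a(1) that by auto
  have W: "?rk w \<le> n" if "j \<in> a n" "1 \<le> n" "y \<in> minset (sel r1 r2 j) (tq_rest r1 r2 a (n-1))"
     "sel r1 r2 j w y" for j n y w
    using weak_lem[OF sel_tpo[OF t1 t2] that] .
  have S: "?rk w < n" if "1 \<le> n" "y \<in> minset (sel r1 r2 j) (tq_rest r1 r2 a (n-1))"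
     "strict (sel r1 r2 j) w y" for j n y w
    using strict_lem[OF that] .
  have ax: "(strict r1 x y \<and> strict r2 z y \<longrightarrow> strict cc x y \<or> strict cc z y) \<and>
       (r1 x y \<and> r2 z y \<longrightarrow> cc x y \<or> cc z y) \<and>
       (strict r1 x y \<and> r2 z y \<longrightarrow> strict cc x y \<or> cc z y) \<and>
       (strict r2 x y \<and> r1 z y \<longrightarrow> strict cc x y \<or> cc z y)" for x y z
  proof -
    obtain j where j: "j \<in> a (?rk y)" "1 \<le> ?rk y"
      "y \<in> minset (sel r1 r2 j) (tq_rest r1 r2 a (?rk y - 1))"
      using y_cell[OF cov] by blast
    show ?thesis
    proof (cases "j = 1")
      case True
      then show ?thesis using W[OF j(1,2,3)] S[OF j(2,3)] s1 sc ceq True by auto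
    next
      case False
      then have "j = 2" using jcase j by blast
      then show ?thesis using W[OF j(1,2,3)] S[OF j(2,3)] s2 sc ceq by auto
    qed
  qed
  show ?thesis using basic ax by blast
qed

definition achoice :: "('w \<Rightarrow> 'w \<Rightarrow> bool) \<Rightarrow> ('w \<Rightarrow> 'w \<Rightarrow> bool) \<Rightarrow> ('w \<Rightarrow> 'w \<Rightarrow> bool) \<Rightarrow> 'w set \<Rightarrow> nat set" where
  "achoice r1 r2 cc D = (if minset cc D = minset r1 D \<union> minset r2 D then {1,2}
      else if minset cc D = minset r1 D then {1} else {2})"

lemma backward:
  fixes r1 r2 cc :: "'w::finite \<Rightarrow> 'w \<Rightarrow> bool"
  assumes t1: "tpo r1" and t2: "tpo r2" and tc: "tpo cc"
    and bas: "minset cc UNIV = minset r1 UNIV \<union> minset r2 UNIV"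
    and spu: "\<And>x y z. strict r1 x y \<Longrightarrow> strict r2 z y \<Longrightarrow> strict cc x y \<or> strict cc z y"
    and wpu: "\<And>x y z. r1 x y \<Longrightarrow> r2 z y \<Longrightarrow> cc x y \<or> cc z y"
    and no1: "\<And>x y z. strict r1 x y \<Longrightarrow> r2 z y \<Longrightarrow> strict cc x y \<or> cc z y"
    and no2: "\<And>x y z. strict r2 x y \<Longrightarrow> r1 z y \<Longrightarrow> strict cc x y \<or> cc z y"
  shows "\<exists>a :: nat \<Rightarrow> nat set.
        (\<forall>i \<ge> 1. a i \<noteq> {} \<and> a i \<subseteq> {1, 2}) \<and> a 1 = {1, 2} \<and>
        (\<exists>m. (\<Union>i \<in> {1..m}. tq_cell r1 r2 a i) = UNIV) \<and>
        (\<forall>x y. cc x y \<longleftrightarrow> tq_rank r1 r2 a x \<le> tq_rank r1 r2 a y)"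
proof -
  define a where "a i = achoice r1 r2 cc (Dseq cc (i - 1))" for i
  have un: "(\<Union>j \<in> achoice r1 r2 cc D. minset (sel r1 r2 j) D) = minset cc D" for D
    using key[OF t1 t2 tc spu wpu no1 no2, of D]
    unfolding achoice_def by (auto simp: sel_def)
  have rest: "tq_rest r1 r2 a k = Dseq cc k" for k
  proof (induction k)
    case 0 then show ?case by simp
  next
    case (Suc n)
    show ?case using Suc un[of "Dseq cc n"] by (simp add: a_def)
  qed
  have cell: "tq_cell r1 r2 a i = minset cc (Dseq cc (i - 1))" for i
    unfolding tq_cell_def using rest un by (simp add: a_def)
  have A1: "\<forall>i \<ge> 1. a i \<noteq> {} \<and> a i \<subseteq> {1, 2}" by (simp add: a_def achoice_def)
  have A2: "a 1 = {1, 2}" using bas by (simp add: a_def achoice_def)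
  define m where "m = card (UNIV :: 'w set)"
  have cov: "(\<Union>i \<in> {1..m}. tq_cell r1 r2 a i) = UNIV"
    using rest_eq[of r1 r2 a m] rest[of m] Dseq_empty[OF tc] unfolding m_def by auto
  let ?rk = "tq_rank r1 r2 a"
  have rel: "cc x y \<longleftrightarrow> ?rk x \<le> ?rk y" for x y
  proof -
    have x: "x \<in> minset cc (Dseq cc (?rk x - 1))" "1 \<le> ?rk x"
      using rank_in_cell[OF cov, of x] cell by auto
    have y: "y \<in> minset cc (Dseq cc (?rk y - 1))" "1 \<le> ?rk y"
      using rank_in_cell[OF cov, of y] cell by auto
    show ?thesis
    proof
      assume cxy: "cc x y"
      show "?rk x \<le> ?rk y"
      proof (rule ccontr)
        assume lt: "\<not> ?rk x \<le> ?rk y"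
        have "tq_rest r1 r2 a (?rk x - 1) \<subseteq> tq_rest r1 r2 a (?rk y - 1)"
          using lt by (intro rest_mono) simp
        then have "x \<in> Dseq cc (?rk y - 1)" using x rest by (auto simp: minset_def)
        then have "x \<in> minset cc (Dseq cc (?rk y - 1))"
          using y cxy tc unfolding minset_def tpo_def by blast
        then have "x \<in> tq_cell r1 r2 a (?rk y)" using cell by simp
        then have "?rk x = ?rk y" using rank_cell y(2) by metis
        then show False using lt by simp
      qed
    next
      assume le: "?rk x \<le> ?rk y"
      have "tq_rest r1 r2 a (?rk y - 1) \<subseteq> tq_rest r1 r2 a (?rk x - 1)"
        using le by (intro rest_mono) simp
      then have "y \<in> Dseq cc (?rk x - 1)" using y rest by (auto simp: minset_def)
      then show "cc x y" using x by (auto simp: minset_def)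
    qed
  qed
  show ?thesis using A1 A2 cov rel by blast
qed

theorem theorem1:
  fixes c :: "('w::finite \<Rightarrow> 'w \<Rightarrow> bool) \<Rightarrow> ('w \<Rightarrow> 'w \<Rightarrow> bool) \<Rightarrow> ('w \<Rightarrow> 'w \<Rightarrow> bool)"
  assumes "is_combinator c"
  shows "teamqueue c \<longleftrightarrow>
    basic c \<and>
    (\<forall>r1 r2. tpo r1 \<longrightarrow> tpo r2 \<longrightarrow> (\<forall>x y z.
       (strict r1 x y \<and> strict r2 z y \<longrightarrow> strict (c r1 r2) x y \<or> strict (c r1 r2) z y) \<and>
       (r1 x y \<and> r2 z y \<longrightarrow> c r1 r2 x y \<or> c r1 r2 z y) \<and>
       (strict r1 x y \<and> r2 z y \<longrightarrow> strict (c r1 r2) x y \<or> c r1 r2 z y) \<and>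
       (strict r2 x y \<and> r1 z y \<longrightarrow> strict (c r1 r2) x y \<or> c r1 r2 z y)))"
proof
  assume tq: "teamqueue c"
  have F: "minset (c r1 r2) UNIV = minset r1 UNIV \<union> minset r2 UNIV \<and>
    (\<forall>x y z.
       (strict r1 x y \<and> strict r2 z y \<longrightarrow> strict (c r1 r2) x y \<or> strict (c r1 r2) z y) \<and>
       (r1 x y \<and> r2 z y \<longrightarrow> c r1 r2 x y \<or> c r1 r2 z y) \<and>
       (strict r1 x y \<and> r2 z y \<longrightarrow> strict (c r1 r2) x y \<or> c r1 r2 z y) \<and>
       (strict r2 x y \<and> r1 z y \<longrightarrow> strict (c r1 r2) x y \<or> c r1 r2 z y))"
    if t: "tpo r1" "tpo r2" for r1 r2
  proof -
    obtain a where A: "(\<forall>i \<ge> 1. a i \<noteq> {} \<and> a i \<subseteq> {1, 2}) \<and> a 1 = {1, 2} \<and>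
        (\<exists>m. (\<Union>i \<in> {1..m}. tq_cell r1 r2 a i) = UNIV) \<and>
        (\<forall>x y. c r1 r2 x y \<longleftrightarrow> tq_rank r1 r2 a x \<le> tq_rank r1 r2 a y)"
      using tq[unfolded teamqueue_def, rule_format, OF t] by (elim exE)
    obtain m where "(\<Union>i \<in> {1..m}. tq_cell r1 r2 a i) = UNIV" using A by (elim conjE exE)
    note m = this
    from forward[OF t conjunct1[OF A] conjunct1[OF conjunct2[OF A]] m conjunct2[OF conjunct2[OF conjunct2[OF A]]]]
    show ?thesis .
  qed
  have B: "basic c" unfolding basic_def
  proof (intro allI impI)
    fix r1 r2 :: "'w \<Rightarrow> 'w \<Rightarrow> bool" assume "tpo r1" "tpo r2"
    from conjunct1[OF F[OF this]] show "minset (c r1 r2) UNIV = minset r1 UNIV \<union> minset r2 UNIV" .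
  qed
  have C: "\<forall>r1 r2. tpo r1 \<longrightarrow> tpo r2 \<longrightarrow> (\<forall>x y z.
       (strict r1 x y \<and> strict r2 z y \<longrightarrow> strict (c r1 r2) x y \<or> strict (c r1 r2) z y) \<and>
       (r1 x y \<and> r2 z y \<longrightarrow> c r1 r2 x y \<or> c r1 r2 z y) \<and>
       (strict r1 x y \<and> r2 z y \<longrightarrow> strict (c r1 r2) x y \<or> c r1 r2 z y) \<and>
       (strict r2 x y \<and> r1 z y \<longrightarrow> strict (c r1 r2) x y \<or> c r1 r2 z y))"
  proof (intro allI impI)
    fix r1 r2 :: "'w \<Rightarrow> 'w \<Rightarrow> bool" and x y z assume "tpo r1" "tpo r2"
    note G = conjunct2[OF F[OF this]]
    from spec[OF spec[OF spec[OF G, of x], of y], of z] show "(strict r1 x y \<and> strict r2 z y \<longrightarrow> strict (c r1 r2) x y \<or> strict (c r1 r2) z y) \<and>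
       (r1 x y \<and> r2 z y \<longrightarrow> c r1 r2 x y \<or> c r1 r2 z y) \<and>
       (strict r1 x y \<and> r2 z y \<longrightarrow> strict (c r1 r2) x y \<or> c r1 r2 z y) \<and>
       (strict r2 x y \<and> r1 z y \<longrightarrow> strict (c r1 r2) x y \<or> c r1 r2 z y)" .
  qed
  show "basic c \<and> (\<forall>r1 r2. tpo r1 \<longrightarrow> tpo r2 \<longrightarrow> (\<forall>x y z.
       (strict r1 x y \<and> strict r2 z y \<longrightarrow> strict (c r1 r2) x y \<or> strict (c r1 r2) z y) \<and>
       (r1 x y \<and> r2 z y \<longrightarrow> c r1 r2 x y \<or> c r1 r2 z y) \<and>
       (strict r1 x y \<and> r2 z y \<longrightarrow> strict (c r1 r2) x y \<or> c r1 r2 z y) \<and>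
       (strict r2 x y \<and> r1 z y \<longrightarrow> strict (c r1 r2) x y \<or> c r1 r2 z y)))"
    using B C by (rule conjI)
next
  assume h: "basic c \<and>
    (\<forall>r1 r2. tpo r1 \<longrightarrow> tpo r2 \<longrightarrow> (\<forall>x y z.
       (strict r1 x y \<and> strict r2 z y \<longrightarrow> strict (c r1 r2) x y \<or> strict (c r1 r2) z y) \<and>
       (r1 x y \<and> r2 z y \<longrightarrow> c r1 r2 x y \<or> c r1 r2 z y) \<and>
       (strict r1 x y \<and> r2 z y \<longrightarrow> strict (c r1 r2) x y \<or> c r1 r2 z y) \<and>
       (strict r2 x y \<and> r1 z y \<longrightarrow> strict (c r1 r2) x y \<or> c r1 r2 z y)))"
  show "teamqueue c"
    unfolding teamqueue_def
  proof (intro allI impI)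
    fix r1 r2 :: "'w \<Rightarrow> 'w \<Rightarrow> bool"
    assume t1: "tpo r1" and t2: "tpo r2"
    have tc: "tpo (c r1 r2)" using assms[unfolded is_combinator_def, rule_format, OF t1 t2] .
    have bas: "minset (c r1 r2) UNIV = minset r1 UNIV \<union> minset r2 UNIV"
      using conjunct1[OF h, unfolded basic_def, rule_format, OF t1 t2] .
    note ax = conjunct2[OF h, rule_format, OF t1 t2]
    show "\<exists>a :: nat \<Rightarrow> nat set.
        (\<forall>i \<ge> 1. a i \<noteq> {} \<and> a i \<subseteq> {1, 2}) \<and> a 1 = {1, 2} \<and>
        (\<exists>m. (\<Union>i \<in> {1..m}. tq_cell r1 r2 a i) = UNIV) \<and>
        (\<forall>x y. c r1 r2 x y \<longleftrightarrow> tq_rank r1 r2 a x \<le> tq_rank r1 r2 a y)"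
    proof (rule backward[OF t1 t2 tc bas])
      show "strict (c r1 r2) x y \<or> strict (c r1 r2) z y" if "strict r1 x y" "strict r2 z y" for x y z
        using ax[of x y z] that by simp
      show "c r1 r2 x y \<or> c r1 r2 z y" if "r1 x y" "r2 z y" for x y z
        using ax[of x y z] that by simp
      show "strict (c r1 r2) x y \<or> c r1 r2 z y" if "strict r1 x y" "r2 z y" for x y z
        using ax[of x y z] that by simp
      show "strict (c r1 r2) x y \<or> c r1 r2 z y" if "strict r2 x y" "r1 z y" for x y z
        using ax[of x y z] that by simp
    qed
  qed
qed

end
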